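(* Let $\alpha\in(1,2)$ and let $p\ge2$ be an even integer (so $p>\alpha$). Set $a:=\left(\pi^4/48\right)^{1/\alpha}$. Then $$f^{p,0}(\theta)\le f^{p,\alpha}(\theta)\qquad\text{for all }\theta\text{ with }|\theta|\in[a,\pi].$$
   Context: For real $\beta\ge0$ and integer $p\ge 2$, $f^{p,\beta}(\theta)=\sum_{l\in\mathbb Z}|\theta+2l\pi|^{\beta}\left(\frac{\sin(\theta/2+l\pi)}{\theta/2+l\pi}\right)^{p+1}$ (with $\frac{\sin x}{x}:=1$ at $x=0$ and $|x|^0:=1$). *)

theory Defs
  imports "HOL-Analysis.Analysis"
begin

definition sinc :: "real \<Rightarrow> real" where
  "sinc x = (if x = 0 then 1 else sin x / x)"

definition abspow :: "real \<Rightarrow> real \<Rightarrow> real" where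
  "abspow x \<beta> = (if \<beta> = 0 then 1 else \<bar>x\<bar> powr \<beta>)"

definition fpb :: "nat \<Rightarrow> real \<Rightarrow> real \<Rightarrow> real" where
  "fpb p \<beta> \<theta> = (\<Sum>\<^sub>\<infinity>l\<in>(UNIV::int set).
      abspow (\<theta> + 2 * of_int l * pi) \<beta> * (sinc (\<theta> / 2 + of_int l * pi)) ^ (p + 1))"

end

theory Submission
  imports Defs
begin

lemma sin_even_shift: "sin (t + real_of_int (2*k) * pi) = sin t"
proof -
  have "real_of_int (2*k) * pi = (2*pi) * of_int k" by simp
  then show ?thesis by (simp only: sin_add sin_int_2pin cos_int_2pin mult_1_right mult_zero_right add_0_right)
qed

lemma sin_odd_shift: "sin (t + real_of_int (2*k+1) * pi) = - sin t"
proof -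
  have "sin (t + real_of_int (2*k+1) * pi) = sin ((t + pi) + real_of_int (2*k) * pi)"
    by (rule arg_cong[where f=sin]) (simp add: algebra_simps)
  also have "\<dots> = sin (t + pi)" by (rule sin_even_shift)
  finally show ?thesis by simp
qed

lemma T_bound:
  fixes \<theta> \<alpha> \<beta> :: real and l :: int and q :: nat
  assumes "1 \<le> \<theta>" "\<theta> \<le> pi" "0 \<le> \<beta>" "\<beta> \<le> \<alpha>" "\<alpha> < real q"
    and xb: "real_of_int \<bar>l\<bar> + 1 \<le> \<bar>\<theta> + 2 * of_int l * pi\<bar>"
  shows "\<bar>abspow (\<theta> + 2 * of_int l * pi) \<beta> * sinc (\<theta> / 2 + of_int l * pi) ^ q\<bar>
         \<le> 2 ^ q * (real_of_int \<bar>l\<bar> + 1) powr (\<alpha> - real q)"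
proof -
  define x where "x = \<theta> + 2 * of_int l * pi"
  define y where "y = \<theta> / 2 + of_int l * pi"
  have xy: "x = 2 * y" by (simp add: x_def y_def algebra_simps)
  have x1: "\<bar>x\<bar> \<ge> 1" using xb by (simp add: x_def)
  then have y0: "y \<noteq> 0" using xy by auto
  have ab: "abspow x \<beta> = \<bar>x\<bar> powr \<beta>" using x1 by (auto simp: abspow_def)
  have s1: "\<bar>sinc y\<bar> \<le> 2 / \<bar>x\<bar>"
  proof -
    have "\<bar>sinc y\<bar> = \<bar>sin y\<bar> / \<bar>y\<bar>" using y0 by (simp add: sinc_def abs_divide)
    also have "\<dots> \<le> 1 / \<bar>y\<bar>" using y0 by (intro divide_right_mono) auto
    also have "\<dots> = 2 / \<bar>x\<bar>" using xy by simp
    finally show ?thesis .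
  qed
  have s2: "\<bar>sinc y\<bar> ^ q \<le> 2 ^ q * \<bar>x\<bar> powr (- real q)"
  proof -
    have "\<bar>sinc y\<bar> ^ q \<le> (2 / \<bar>x\<bar>) ^ q" using s1 by (intro power_mono) auto
    also have "\<dots> = 2 ^ q * \<bar>x\<bar> powr (- real q)"
      using x1 by (simp add: powr_minus powr_realpow power_divide divide_inverse power_inverse)
    finally show ?thesis .
  qed
  have "\<bar>abspow x \<beta> * sinc y ^ q\<bar> = \<bar>x\<bar> powr \<beta> * \<bar>sinc y\<bar> ^ q"
    by (simp add: ab abs_mult power_abs)
  also have "\<dots> \<le> \<bar>x\<bar> powr \<beta> * (2 ^ q * \<bar>x\<bar> powr (- real q))"
    using s2 by (intro mult_left_mono) auto
  also have "\<dots> = 2 ^ q * \<bar>x\<bar> powr (\<beta> - real q)"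
    using x1 by (simp add: powr_add[symmetric] mult_ac)
  also have "\<dots> \<le> 2 ^ q * \<bar>x\<bar> powr (\<alpha> - real q)"
    using x1 assms by (intro mult_left_mono powr_mono) auto
  also have "\<dots> \<le> 2 ^ q * (real_of_int \<bar>l\<bar> + 1) powr (\<alpha> - real q)"
    using xb assms by (intro mult_left_mono powr_mono2') (auto simp: x_def)
  finally show ?thesis by (simp add: x_def y_def)
qed

lemma g_eq:
  fixes y \<alpha> :: real and q :: nat
  assumes "y > 0"
  shows "(y powr \<alpha> - 1) / y ^ q = y powr (\<alpha> - real q) - y powr (- real q)"
  using assms by (simp add: powr_diff powr_minus powr_realpow field_simps)

lemma g_dec:
  fixes u v \<alpha> :: real and q :: nat
  assumes "pi \<le> u" "u \<le> v" "1 < \<alpha>" "\<alpha> < 2" "q \<ge> 3"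
  shows "(v powr \<alpha> - 1) / v ^ q \<le> (u powr \<alpha> - 1) / u ^ q"
proof -
  let ?h = "\<lambda>y::real. y powr (\<alpha> - real q) - y powr (- real q)"
  have "?h v \<le> ?h u"
  proof (rule DERIV_nonpos_imp_nonincreasing[OF assms(2)])
    fix y assume y: "u \<le> y" "y \<le> v"
    then have y0: "y > 0" "y \<ge> pi" using assms pi_gt3 by linarith+
    have D: "(?h has_real_derivative
       ((\<alpha> - real q) * y powr (\<alpha> - real q - 1) - (- real q) * y powr (- real q - 1))) (at y)"
      by (intro derivative_intros has_real_derivative_powr y0)
    have e1: "y powr (\<alpha> - real q - 1) = y powr \<alpha> * y powr (- real q - 1)"
    proof -
      have "\<alpha> - real q - 1 = \<alpha> + (- real q - 1)" by simp
      then show ?thesis using y0 by (simp only: powr_add)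
    qed
    have ya: "y powr \<alpha> \<ge> y"
    proof -
      have "y powr 1 \<le> y powr \<alpha>" using y0 assms pi_gt3 by (intro powr_mono) auto
      then show ?thesis using y0 by simp
    qed
    have q3: "real q \<ge> 3" using assms by simp
    have "real q * (pi - 1) \<ge> 3 * (pi - 1)" using q3 pi_gt3 by (intro mult_right_mono) auto
    then have a: "real q * pi - real q \<ge> 3 * pi - 3" by (simp add: algebra_simps)
    have b: "\<alpha> * pi \<le> 2 * pi" using assms pi_gt3 by (intro mult_right_mono) auto
    have "real q \<le> real q * pi - \<alpha> * pi" using a b pi_gt3 by linarith
    then have k1: "real q \<le> (real q - \<alpha>) * pi" by (simp add: algebra_simps)
    have "(real q - \<alpha>) * pi \<le> (real q - \<alpha>) * y powr \<alpha>"
      using ya y0 assms q3 by (intro mult_left_mono) auto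
    with k1 have k2: "real q \<le> (real q - \<alpha>) * y powr \<alpha>" by linarith
    have pz: "y powr (- real q - 1) > 0" using y0 by simp
    have "real q * y powr (- real q - 1) \<le> (real q - \<alpha>) * y powr \<alpha> * y powr (- real q - 1)"
      using k2 pz by (intro mult_right_mono) auto
    then have "(\<alpha> - real q) * y powr (\<alpha> - real q - 1) - (- real q) * y powr (- real q - 1) \<le> 0"
      unfolding e1 by (simp add: algebra_simps)
    with D show "\<exists>d. (?h has_real_derivative d) (at y) \<and> d \<le> 0" by blast
  qed
  moreover have "u > 0" "v > 0" using assms pi_gt3 by linarith+
  ultimately show ?thesis by (simp add: g_eq)
qed

lemma g_first:
  fixes \<theta> \<alpha> :: real and q :: nat
  assumes "1 \<le> \<theta>" "\<theta> \<le> pi" "1 < \<alpha>" "\<alpha> < 2" "q \<ge> 3" "\<theta> powr \<alpha> \<ge> 3/2"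
  shows "((\<theta> + 2*pi) powr \<alpha> - 1) / (\<theta> + 2*pi) ^ q \<le> (\<theta> powr \<alpha> - 1) / \<theta> ^ q"
proof -
  define v where "v = \<theta> + 2*pi"
  define r where "r = \<theta> / v"
  have v0: "v > 0" "\<theta> > 0" using assms pi_gt3 by (auto simp: v_def)
  have r0: "r > 0" "r \<le> 1/3" using v0 assms by (auto simp: r_def v_def field_simps)
  have "r ^ q \<le> r ^ 3" using r0 assms by (intro power_decreasing) auto
  also have "r ^ 3 = r * r^2" by (simp add: power_numeral_reduce)
  also have "\<dots> \<le> (1/3) * r^2" using r0 by (intro mult_right_mono) auto
  also have "r^2 = r powr 2" using r0 by (simp add: powr_realpow)
  also have "r powr 2 \<le> r powr \<alpha>" using r0 assms by (intro powr_mono') auto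
  finally have k: "3 * r ^ q \<le> r powr \<alpha>" by simp
  have k2: "3 * (\<theta> ^ q * v powr \<alpha>) \<le> \<theta> powr \<alpha> * v ^ q"
  proof -
    have e1: "r ^ q * v ^ q = \<theta> ^ q" using v0 by (simp add: r_def power_divide)
    have e2: "r powr \<alpha> * v powr \<alpha> = \<theta> powr \<alpha>" using v0 by (simp add: r_def powr_divide)
    have "3 * (\<theta> ^ q * v powr \<alpha>) = 3 * r ^ q * (v ^ q * v powr \<alpha>)" by (simp add: e1[symmetric] mult_ac)
    also have "\<dots> \<le> r powr \<alpha> * (v ^ q * v powr \<alpha>)"
      using k v0 by (intro mult_right_mono) auto
    also have "\<dots> = \<theta> powr \<alpha> * v ^ q" by (simp add: e2[symmetric] mult_ac)
    finally show ?thesis .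
  qed
  have "(v powr \<alpha> - 1) / v ^ q \<le> v powr \<alpha> / v ^ q" using v0 by (intro divide_right_mono) auto
  also have "\<dots> \<le> (\<theta> powr \<alpha> / 3) / \<theta> ^ q" using k2 v0 by (simp add: field_simps)
  also have "\<dots> \<le> (\<theta> powr \<alpha> - 1) / \<theta> ^ q" using assms v0 by (intro divide_right_mono) auto
  finally show ?thesis by (simp add: v_def)
qed

lemma x_bound:
  fixes \<theta> :: real and l :: int
  assumes "1 \<le> \<theta>" "\<theta> \<le> pi"
  shows "real_of_int \<bar>l\<bar> + 1 \<le> \<bar>\<theta> + 2 * of_int l * pi\<bar>"
proof -
  have pi3: "pi > 3" by (rule pi_gt3)
  consider "l = 0" | "l \<ge> 1" | "l \<le> -1" by linarith
  then show ?thesis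
  proof cases
    case 1 then show ?thesis using assms by simp
  next
    case 2
    then have m: "real_of_int l \<ge> 1" by simp
    have "real_of_int l * pi \<ge> real_of_int l * 3" using m pi3 by (intro mult_left_mono) auto
    then have "\<theta> + 2 * of_int l * pi \<ge> real_of_int l + 1" using m assms by linarith
    then show ?thesis using 2 by auto
  next
    case 3
    then have m: "real_of_int l \<le> -1" by simp
    have "(- real_of_int l) * pi \<ge> (- real_of_int l) * 3" using m pi3 by (intro mult_left_mono) auto
    then have "\<theta> + 2 * of_int l * pi \<le> - (real_of_int (-l) + 1)" using m assms pi_less_4 by linarith
    then show ?thesis using 3 by auto
  qed
qed

lemma phi_step:
  fixes \<theta> \<alpha> :: real and q :: nat and k :: int
  assumes "1 \<le> \<theta>" "\<theta> \<le> pi" "1 < \<alpha>" "\<alpha> < 2" "q \<ge> 3" "odd q" "\<theta> powr \<alpha> \<ge> 3/2"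
  defines "x \<equiv> \<theta> + 2 * of_int (2*k) * pi"
  shows "(\<bar>x + 2*pi\<bar> powr \<alpha> - 1) / (x + 2*pi) ^ q \<le> (\<bar>x\<bar> powr \<alpha> - 1) / x ^ q"
proof -
  consider "k = 0" | "k \<ge> 1" | "k \<le> -1" by linarith
  then show ?thesis
  proof cases
    case 1
    then have "x = \<theta>" by (simp add: x_def)
    moreover have "\<theta> + 2*pi > 0" using assms pi_gt3 by linarith
    ultimately show ?thesis using g_first[OF assms(1-5,7)] assms(1) by simp
  next
    case 2
    then have "real_of_int k \<ge> 1" by simp
    then have "real_of_int k * pi \<ge> 1 * pi" using pi_gt3 by (intro mult_right_mono) auto
    moreover have "x = \<theta> + 4*(real_of_int k * pi)" by (simp add: x_def)
    ultimately have "x \<ge> pi" using assms pi_gt3 by linarith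
    then show ?thesis using g_dec[of x "x + 2*pi" \<alpha> q] assms pi_gt3 by simp
  next
    case 3
    then have "real_of_int k \<le> -1" by simp
    then have "real_of_int k * pi \<le> (-1) * pi" using pi_gt3 by (intro mult_right_mono) auto
    moreover have "x = \<theta> + 4*(real_of_int k * pi)" by (simp add: x_def)
    ultimately have xl: "x + 2*pi \<le> - pi" using assms by linarith
    then have "x < 0" "x + 2*pi < 0" using pi_gt3 by linarith+
    have neg: "(\<bar>y\<bar> powr \<alpha> - 1) / y ^ q = - (((-y) powr \<alpha> - 1) / (-y) ^ q)" if "y < 0" for y :: real
      using that assms(6) by simp
    note e1 = neg[OF \<open>x < 0\<close>] and e2 = neg[OF \<open>x + 2*pi < 0\<close>]
    have "((-x) powr \<alpha> - 1) / (-x) ^ q \<le> ((-(x + 2*pi)) powr \<alpha> - 1) / (-(x + 2*pi)) ^ q"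
      using g_dec[of "-(x + 2*pi)" "-x" \<alpha> q] xl assms by simp
    then show ?thesis unfolding e1 e2 by simp
  qed
qed

lemma pair_nonneg:
  fixes \<theta> \<alpha> :: real and p :: nat and k :: int
  assumes "1 \<le> \<theta>" "\<theta> \<le> pi" "1 < \<alpha>" "\<alpha> < 2" "p \<ge> 2" "even p" "\<theta> powr \<alpha> \<ge> 3/2"
  defines "T \<equiv> \<lambda>\<beta> l. abspow (\<theta> + 2 * of_int l * pi) \<beta> * sinc (\<theta> / 2 + of_int l * pi) ^ (p+1)"
  shows "0 \<le> (T \<alpha> (2*k) - T 0 (2*k)) + (T \<alpha> (2*k+1) - T 0 (2*k+1))"
proof -
  define q where "q = p + 1"
  have q: "q \<ge> 3" "odd q" using assms by (auto simp: q_def)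
  define sv where "sv = sin (\<theta>/2)"
  have s0: "sv \<ge> 0" unfolding sv_def using assms by (intro sin_ge_zero) auto
  define x where "x = \<theta> + 2 * of_int (2*k) * pi"
  have x': "\<theta> + 2 * of_int (2*k+1) * pi = x + 2*pi" by (simp add: x_def algebra_simps)
  have x1: "\<bar>x\<bar> \<ge> 1" using x_bound[OF assms(1,2), of "2*k"] by (simp add: x_def)
  have x2: "\<bar>x + 2*pi\<bar> \<ge> 1" using x_bound[OF assms(1,2), of "2*k+1"] x' by simp
  have y1: "\<theta> / 2 + of_int (2*k) * pi = x / 2" by (simp add: x_def)
  have y2: "\<theta> / 2 + of_int (2*k+1) * pi = (x + 2*pi) / 2" by (simp add: x_def algebra_simps)
  have si1: "sin (x/2) = sv"
  proof -
    have "sin (x/2) = sin (\<theta>/2 + of_int (2*k)*pi)" by (simp only: y1)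
    then show ?thesis by (simp only: sin_even_shift sv_def)
  qed
  have si2: "sin ((x + 2*pi)/2) = - sv"
  proof -
    have "sin ((x + 2*pi)/2) = sin (\<theta>/2 + of_int (2*k+1)*pi)" by (simp only: y2)
    then show ?thesis by (simp only: sin_odd_shift sv_def)
  qed
  have sc1: "sinc (x/2) = 2 * sv / x"
    using x1 si1 by (auto simp: sinc_def)
  have sc2: "sinc ((x + 2*pi)/2) = - (2 * sv / (x + 2*pi))"
    using x2 si2 by (auto simp: sinc_def)
  have A: "T \<alpha> (2*k) - T 0 (2*k) = (2 * sv)^q * ((\<bar>x\<bar> powr \<alpha> - 1) / x ^ q)"
    using x1 assms(3) unfolding T_def q_def[symmetric] y1 x_def[symmetric]
    by (simp add: abspow_def sc1 power_divide diff_divide_distrib algebra_simps)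
  have B: "T \<alpha> (2*k+1) - T 0 (2*k+1) = - ((2 * sv)^q * ((\<bar>x + 2*pi\<bar> powr \<alpha> - 1) / (x + 2*pi) ^ q))"
    using x2 assms(3) q(2) unfolding T_def q_def[symmetric] y2 x' sc2
    by (simp add: abspow_def power_divide diff_divide_distrib algebra_simps)
  have "(2 * sv)^q * ((\<bar>x + 2*pi\<bar> powr \<alpha> - 1) / (x + 2*pi) ^ q) \<le> (2 * sv)^q * ((\<bar>x\<bar> powr \<alpha> - 1) / x ^ q)"
    using phi_step[OF assms(1-4) q assms(7), of k] s0 by (intro mult_left_mono) (auto simp: x_def)
  then show ?thesis unfolding A B by simp
qed

lemma G_summable:
  assumes "r > 1"
  shows "(\<lambda>l::int. (real_of_int \<bar>l\<bar> + 1) powr (-r)) summable_on UNIV"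
proof -
  let ?G = "\<lambda>l::int. (real_of_int \<bar>l\<bar> + 1) powr (-r)"
  have s0: "summable (\<lambda>n. real n powr (-r))"
    using assms by (subst summable_real_powr_iff) auto
  have s1: "summable (\<lambda>n. real (n+1) powr (-r))"
    using summable_ignore_initial_segment[OF s0, of 1] by simp
  have H: "(\<lambda>n::nat. (real n + 1) powr (-r)) summable_on UNIV"
    using s1 by (subst summable_on_UNIV_nonneg_real_iff) (auto simp: add.commute)
  have A: "?G summable_on (int ` UNIV)"
    by (subst summable_on_reindex) (auto simp: o_def H)
  have B: "?G summable_on ((\<lambda>n. - int n) ` UNIV)"
    by (subst summable_on_reindex) (auto simp: o_def H inj_on_def)
  have U: "UNIV = int ` UNIV \<union> (\<lambda>n. - int n) ` UNIV"
  proof -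
    have "x \<in> int ` UNIV \<union> (\<lambda>n. - int n) ` UNIV" for x :: int
    proof (cases "x \<ge> 0")
      case True then show ?thesis by (metis UnI1 nonneg_int_cases rangeI)
    next
      case False then have "x = - int (nat (-x))" by simp
      then show ?thesis by (metis UnI2 rangeI)
    qed
    then show ?thesis by blast
  qed
  show ?thesis by (subst U, rule summable_on_union[OF A B])
qed

lemma abspow_neg: "abspow (- x) b = abspow x b" by (simp add: abspow_def)
lemma sinc_neg: "sinc (- x) = sinc x" by (simp add: sinc_def)

lemma fpb_neg: "fpb p b (- \<theta>) = fpb p b \<theta>"
proof -
  let ?g = "\<lambda>l::int. abspow (- \<theta> + 2 * of_int l * pi) b * sinc (- \<theta> / 2 + of_int l * pi) ^ (p + 1)"
  have "fpb p b (- \<theta>) = infsum ?g (uminus ` UNIV)"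
    by (simp add: fpb_def surj_def)
  also have "\<dots> = infsum (?g \<circ> uminus) UNIV" by (rule infsum_reindex) simp
  also have "\<dots> = fpb p b \<theta>"
  proof -
    have e: "(?g \<circ> uminus) l = abspow (\<theta> + 2 * of_int l * pi) b * sinc (\<theta> / 2 + of_int l * pi) ^ (p + 1)" for l
    proof -
      have "- \<theta> + 2 * of_int (-l) * pi = - (\<theta> + 2 * of_int l * pi)" by simp
      moreover have "- \<theta> / 2 + of_int (-l) * pi = - (\<theta> / 2 + of_int l * pi)" by simp
      ultimately show ?thesis by (simp only: o_def abspow_neg sinc_neg)
    qed
    show ?thesis unfolding fpb_def by (rule infsum_cong) (rule e)
  qed
  finally show ?thesis .
qed

lemma two_k_neq: "2*a \<noteq> 2*b+(1::int)"
proof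
  assume "2*a = 2*b+(1::int)"
  then have "even (2*b+(1::int))" by (metis dvd_triv_left)
  then show False by simp
qed

lemma main_pos:
  fixes \<alpha> \<theta> :: real and p :: nat
  assumes "1 < \<alpha>" and "\<alpha> < 2"
    and "p \<ge> 2" and "even p"
    and "(pi ^ 4 / 48) powr (1 / \<alpha>) \<le> \<theta>" and "\<theta> \<le> pi"
  shows "fpb p 0 \<theta> \<le> fpb p \<alpha> \<theta>"
proof -
  define a where "a = (pi ^ 4 / 48) powr (1 / \<alpha>)"
  have c0: "pi ^ 4 / 48 > 0" by simp
  have a0: "a > 0" using c0 by (simp add: a_def)
  have ta: "\<theta> powr \<alpha> \<ge> pi ^ 4 / 48"
  proof -
    have "a powr \<alpha> \<le> \<theta> powr \<alpha>" using assms a0 by (intro powr_mono2) (auto simp: a_def)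
    moreover have "a powr \<alpha> = pi ^ 4 / 48" using c0 assms(1) by (simp add: a_def powr_powr)
    ultimately show ?thesis by simp
  qed
  have "(3::real) ^ 4 \<le> pi ^ 4" using pi_gt3 by (intro power_mono) auto
  then have t32: "\<theta> powr \<alpha> \<ge> 3/2" using ta by simp
  have th0: "\<theta> > 0" using a0 assms(5) unfolding a_def by linarith
  have t1: "\<theta> \<ge> 1"
  proof (rule ccontr)
    assume "\<not> 1 \<le> \<theta>"
    then have "\<theta> powr \<alpha> \<le> \<theta> powr 0" using th0 assms by (intro powr_mono') auto
    then show False using th0 t32 by simp
  qed
  define T where "T \<equiv> \<lambda>\<beta> l. abspow (\<theta> + 2 * of_int l * pi) \<beta> * sinc (\<theta> / 2 + of_int l * pi) ^ (p+1)"
  define G where "G \<equiv> \<lambda>l::int. 2 ^ (p+1) * (real_of_int \<bar>l\<bar> + 1) powr (\<alpha> - real (p+1))"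
  have Gs: "G summable_on UNIV"
  proof -
    have "(\<lambda>l::int. (real_of_int \<bar>l\<bar> + 1) powr (- (real (p+1) - \<alpha>))) summable_on UNIV"
      using assms(2,3) by (intro G_summable) simp
    then show ?thesis unfolding G_def by (intro summable_on_cmult_right) simp
  qed
  have ap: "\<alpha> < real (p+1)" using assms(2,3) by simp
  have Ts: "T \<beta> summable_on UNIV" if "0 \<le> \<beta>" "\<beta> \<le> \<alpha>" for \<beta>
  proof -
    have "(\<lambda>l. norm (T \<beta> l)) summable_on UNIV"
    proof (rule summable_on_comparison_test[OF Gs])
      fix l :: int
      show "norm (T \<beta> l) \<le> G l"
        unfolding T_def G_def real_norm_def
        by (rule T_bound[OF t1 assms(6) that ap x_bound[OF t1 assms(6)]])
    qed simp
    then show ?thesis by (subst summable_on_iff_abs_summable_on_real)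
  qed
  define d where "d \<equiv> \<lambda>l. T \<alpha> l - T 0 l"
  have T0s: "T 0 summable_on UNIV" using Ts[of 0] assms(1) by simp
  have ds: "d summable_on UNIV"
  proof -
    have "(\<lambda>l. T \<alpha> l + - T 0 l) summable_on UNIV"
      using Ts[of \<alpha>] T0s assms(1) by (intro summable_on_add) (auto simp: summable_on_uminus)
    then show ?thesis by (simp add: d_def)
  qed
  have fa: "fpb p \<alpha> \<theta> = fpb p 0 \<theta> + infsum d UNIV"
  proof -
    have "fpb p \<alpha> \<theta> = infsum (\<lambda>l. T 0 l + d l) UNIV" by (simp add: fpb_def T_def d_def)
    also have "\<dots> = infsum (T 0) UNIV + infsum d UNIV" by (rule infsum_add[OF T0s ds])
    finally show ?thesis by (simp add: fpb_def T_def)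
  qed
  define Ev where "Ev = range (\<lambda>k::int. 2*k)"
  define Od where "Od = range (\<lambda>k::int. 2*k+1)"
  have U: "UNIV = Ev \<union> Od"
  proof -
    have "x \<in> Ev \<union> Od" for x :: int
    proof (cases "even x")
      case True then show ?thesis by (auto simp: Ev_def)
    next
      case False then have "x = 2 * (x div 2) + 1" by (simp add: odd_two_times_div_two_succ)
      then show ?thesis by (auto simp: Od_def)
    qed
    then show ?thesis by blast
  qed
  have disj: "Ev \<inter> Od = {}" by (auto simp: Ev_def Od_def two_k_neq)
  have injE: "inj_on (\<lambda>k::int. 2*k) UNIV" by (auto simp: inj_on_def)
  have injO: "inj_on (\<lambda>k::int. 2*k+1) UNIV" by (auto simp: inj_on_def)
  have dE: "d summable_on Ev" by (rule summable_on_subset_banach[OF ds]) simp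
  have dO: "d summable_on Od" by (rule summable_on_subset_banach[OF ds]) simp
  have sE: "(\<lambda>k. d (2*k)) summable_on UNIV"
    using dE summable_on_reindex[OF injE, of d] by (simp add: Ev_def o_def)
  have sO: "(\<lambda>k. d (2*k+1)) summable_on UNIV"
    using dO summable_on_reindex[OF injO, of d] by (simp add: Od_def o_def)
  have pn: "0 \<le> d (2*k) + d (2*k+1)" for k
    unfolding d_def T_def by (rule pair_nonneg[OF t1 assms(6,1,2,3,4) t32])
  have "infsum d UNIV = infsum d Ev + infsum d Od" unfolding U by (rule infsum_Un_disjoint[OF dE dO disj])
  also have "infsum d Ev = infsum (\<lambda>k. d (2*k)) UNIV"
    unfolding Ev_def by (subst infsum_reindex[OF injE]) (simp add: o_def)
  also have "infsum d Od = infsum (\<lambda>k. d (2*k+1)) UNIV"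
    unfolding Od_def by (subst infsum_reindex[OF injO]) (simp add: o_def)
  also have "infsum (\<lambda>k. d (2*k)) UNIV + infsum (\<lambda>k. d (2*k+1)) UNIV
       = infsum (\<lambda>k. d (2*k) + d (2*k+1)) UNIV" by (rule infsum_add[OF sE sO, symmetric])
  also have "\<dots> \<ge> 0"
    using pn by (intro infsum_nonneg) simp
  finally show ?thesis using fa by simp
qed

theorem proposition5p5:
  fixes \<alpha> \<theta> :: real and p :: nat
  assumes "1 < \<alpha>" and "\<alpha> < 2"
    and "p \<ge> 2" and "even p"
    and "(pi ^ 4 / 48) powr (1 / \<alpha>) \<le> \<bar>\<theta>\<bar>" and "\<bar>\<theta>\<bar> \<le> pi"
  shows "fpb p 0 \<theta> \<le> fpb p \<alpha> \<theta>"
proof (cases "\<theta> \<ge> 0")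
  case True
  then have e: "\<bar>\<theta>\<bar> = \<theta>" by simp
  show ?thesis by (rule main_pos[OF assms(1-4) assms(5,6)[unfolded e]])
next
  case False
  then have e: "\<bar>\<theta>\<bar> = - \<theta>" by simp
  have "fpb p 0 (-\<theta>) \<le> fpb p \<alpha> (-\<theta>)" by (rule main_pos[OF assms(1-4) assms(5,6)[unfolded e]])
  then show ?thesis by (simp only: fpb_neg)
qed

end
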